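(* (i) For all closed infinite $\lambda$-preterms $s$ and $t$: the equation $\lambda.s=\lambda.t$ has a completed derivation in $\mathbf{EQ}_\alpha^\infty$ if and only if $s\equiv_\alpha t$. (ii) For all prefixed infinite $\lambda$-terms $M$ and $N$: $M=N$ has a completed derivation in $\mathbf{EQ}^\infty$ if and only if $M=N$.
   Context: Infinite $\lambda$-preterms are possibly infinite terms built from named variables, abstractions $\lambda y.s$ and applications $s\,t$ (not identified modulo $\alpha$-equivalence); $\equiv_\alpha$ is $\alpha$-equivalence; infinite $\lambda$-terms are their $\alpha$-equivalence classes. A prefixed (pre)term is $\lambda x_1\ldots x_n.s$ ($n\ge0$, distinct variables, separate abstraction prefix; $\lambda.s$ for the empty prefix) with the free variables of $s$ among the $x_i$. The proof system $\mathbf{EQ}_\alpha^\infty$ derives equations between prefixed preterms with prefixes of equal length, with rules: axiom $\lambda x_1\ldots x_n y.y=\lambda z_1\ldots z_n u.u$; from $\lambda x_1\ldots x_n.s=\lambda z_1\ldots z_n.t$ infer $\lambda x_1\ldots x_n y.s=\lambda z_1\ldots z_n w.t$ provided $y$ is not free in $s$ and $w$ is not free in $t$; from $\lambda\vec{x}y.s=\lambda\vec{z}u.t$ infer $\lambda\vec{x}.\lambda y.s=\lambda\vec{z}.\lambda u.t$; from $\lambda\vec{x}.s_0=\lambda\vec{y}.t_0$ and $\lambda\vec{x}.s_1=\lambda\vec{y}.t_1$ infer $\lambda\vec{x}.(s_0\,s_1)=\lambda\vec{y}.(t_0\,t_1)$. $\mathbf{EQ}^\infty$ has the same rules for prefixed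 terms (modulo $\alpha$). A completed derivation is a possibly infinite proof tree built from these rules in which every maximal finite path ends in an axiom.
   Formalization: Prefixes of prefixed preterms need not consist of distinct variables, so the rules of $\mathbf{EQ}_\alpha^\infty$ may produce repeated prefix variables, with the rightmost occurrence binding. The statement above fails without it. *)

theory Defs
  imports Main
begin

text \<open>Possibly infinite preterms over named variables of type 'v (not modulo alpha).\<close>
codatatype 'v pterm = Var 'v | Abs 'v "'v pterm" | App "'v pterm" "'v pterm"

text \<open>Free variables (a free occurrence lies at finite depth, hence inductive).\<close>
inductive free :: "'v \<Rightarrow> 'v pterm \<Rightarrow> bool" where
  free_Var: "free x (Var x)"
| free_Abs: "free x s \<Longrightarrow> x \<noteq> y \<Longrightarrow> free x (Abs y s)"
| free_App1: "free x s \<Longrightarrow> free x (App s t)"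
| free_App2: "free x t \<Longrightarrow> free x (App s t)"

definition closed :: "'v pterm \<Rightarrow> bool" where
  "closed s \<longleftrightarrow> (\<forall>x. \<not> free x s)"

codatatype 'v dbterm = DFree 'v | DBound nat | DAbs "'v dbterm" | DApp "'v dbterm" "'v dbterm"

fun idx :: "'v list \<Rightarrow> 'v \<Rightarrow> nat option" where
  "idx [] x = None"
| "idx (y # ys) x = (if x = y then Some 0 else map_option Suc (idx ys x))"

text \<open>Gamma is the stack of enclosing binders, innermost first.\<close>
primcorec db :: "'v list \<Rightarrow> 'v pterm \<Rightarrow> 'v dbterm" where
  "db \<Gamma> s = (case s of
      Var x \<Rightarrow> (case idx \<Gamma> x of None \<Rightarrow> DFree x | Some i \<Rightarrow> DBound i)
    | Abs x u \<Rightarrow> DAbs (db (x # \<Gamma>) u)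
    | App u v \<Rightarrow> DApp (db \<Gamma> u) (db \<Gamma> v))"

definition alpha :: "'v pterm \<Rightarrow> 'v pterm \<Rightarrow> bool" where
  "alpha s t \<longleftrightarrow> db [] s = db [] t"

text \<open>A prefixed preterm \<lambda>x1...xn.s is represented by the pair (xs, s).\<close>
type_synonym 'v ppt = "'v list \<times> 'v pterm"

definition prefixed :: "'v ppt \<Rightarrow> bool" where
  "prefixed P \<longleftrightarrow> (\<forall>x. free x (snd P) \<longrightarrow> x \<in> set (fst P))"

text \<open>Derivability by a completed (possibly infinite) derivation: greatest fixed point.\<close>
coinductive EQa :: "'v ppt \<Rightarrow> 'v ppt \<Rightarrow> bool" where
  EQa_ax: "length xs = length zs \<Longrightarrow> EQa (xs @ [y], Var y) (zs @ [u], Var u)"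
| EQa_wk: "length xs = length zs \<Longrightarrow> EQa (xs, s) (zs, t) \<Longrightarrow> \<not> free y s \<Longrightarrow> \<not> free w t
           \<Longrightarrow> EQa (xs @ [y], s) (zs @ [w], t)"
| EQa_lam: "length xs = length zs \<Longrightarrow> EQa (xs @ [y], s) (zs @ [u], t)
           \<Longrightarrow> EQa (xs, Abs y s) (zs, Abs u t)"
| EQa_app: "length xs = length zs \<Longrightarrow> EQa (xs, s0) (zs, t0) \<Longrightarrow> EQa (xs, s1) (zs, t1)
           \<Longrightarrow> EQa (xs, App s0 s1) (zs, App t0 t1)"

fun abss :: "'v list \<Rightarrow> 'v pterm \<Rightarrow> 'v pterm" where
  "abss [] s = s"
| "abss (x # xs) s = Abs x (abss xs s)"

definition palpha :: "'v ppt \<Rightarrow> 'v ppt \<Rightarrow> bool" where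
  "palpha P Q \<longleftrightarrow> prefixed P \<and> prefixed Q \<and> length (fst P) = length (fst Q)
     \<and> alpha (abss (fst P) (snd P)) (abss (fst Q) (snd Q))"

lemma palpha_part_equivp: "part_equivp (palpha :: 'v ppt \<Rightarrow> 'v ppt \<Rightarrow> bool)"
proof (rule part_equivpI)
  fix a :: 'v
  have "\<not> free x (Abs a (Var a))" for x
    by (auto elim: free.cases)
  then have "palpha ([], Abs a (Var a)) ([], Abs a (Var a))"
    by (simp add: palpha_def prefixed_def alpha_def)
  then show "\<exists>x :: 'v ppt. palpha x x" by (rule exI)
  show "symp (palpha :: 'v ppt \<Rightarrow> _)" by (auto simp: symp_def palpha_def alpha_def)
  show "transp (palpha :: 'v ppt \<Rightarrow> _)" by (auto simp: transp_def palpha_def alpha_def)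
qed

quotient_type 'v pfterm = "'v ppt" / partial: palpha
  by (rule palpha_part_equivp)

coinductive EQ :: "'v pfterm \<Rightarrow> 'v pfterm \<Rightarrow> bool" where
  EQ_ax: "length xs = length zs
     \<Longrightarrow> EQ (abs_pfterm (xs @ [y], Var y)) (abs_pfterm (zs @ [u], Var u))"
| EQ_wk: "length xs = length zs \<Longrightarrow> prefixed (xs, s) \<Longrightarrow> prefixed (zs, t)
     \<Longrightarrow> EQ (abs_pfterm (xs, s)) (abs_pfterm (zs, t)) \<Longrightarrow> \<not> free y s \<Longrightarrow> \<not> free w t
     \<Longrightarrow> EQ (abs_pfterm (xs @ [y], s)) (abs_pfterm (zs @ [w], t))"
| EQ_lam: "length xs = length zs \<Longrightarrow> prefixed (xs @ [y], s) \<Longrightarrow> prefixed (zs @ [u], t)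
     \<Longrightarrow> EQ (abs_pfterm (xs @ [y], s)) (abs_pfterm (zs @ [u], t))
     \<Longrightarrow> EQ (abs_pfterm (xs, Abs y s)) (abs_pfterm (zs, Abs u t))"
| EQ_app: "length xs = length zs \<Longrightarrow> prefixed (xs, s0) \<Longrightarrow> prefixed (zs, t0)
     \<Longrightarrow> prefixed (xs, s1) \<Longrightarrow> prefixed (zs, t1)
     \<Longrightarrow> EQ (abs_pfterm (xs, s0)) (abs_pfterm (zs, t0)) \<Longrightarrow> EQ (abs_pfterm (xs, s1)) (abs_pfterm (zs, t1))
     \<Longrightarrow> EQ (abs_pfterm (xs, App s0 s1)) (abs_pfterm (zs, App t0 t1))"

end

theory Submission
  imports Defs
begin

lemma db_Var: "db G (Var x) = (case idx G x of None \<Rightarrow> DFree x | Some i \<Rightarrow> DBound i)"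
  by (subst db.code) simp
lemma db_Abs[simp]: "db G (Abs x u) = DAbs (db (x # G) u)"
  by (subst db.code) simp
lemma db_App[simp]: "db G (App u v) = DApp (db G u) (db G v)"
  by (subst db.code) simp

inductive_simps free_Var_iff[simp]: "free x (Var y)"
inductive_simps free_Abs_iff[simp]: "free x (Abs y s)"
inductive_simps free_App_iff[simp]: "free x (App s t)"

lemma dbterm_eqI:
  assumes "R a b"
    and step: "\<And>a b. R a b \<Longrightarrow> (\<exists>x. a = DFree x \<and> b = DFree x) \<or> (\<exists>i. a = DBound i \<and> b = DBound i)
      \<or> (\<exists>a' b'. a = DAbs a' \<and> b = DAbs b' \<and> R a' b')
      \<or> (\<exists>a1 a2 b1 b2. a = DApp a1 a2 \<and> b = DApp b1 b2 \<and> R a1 b1 \<and> R a2 b2)"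
  shows "a = b"
  using assms(1)
proof (coinduction arbitrary: a b rule: dbterm.coinduct)
  case (Eq_dbterm a b)
  from step[OF Eq_dbterm] show ?case by auto
qed

definition lift :: "(nat \<Rightarrow> nat) \<Rightarrow> nat \<Rightarrow> nat" where
  "lift f i = (case i of 0 \<Rightarrow> 0 | Suc j \<Rightarrow> Suc (f j))"

primcorec ren :: "(nat \<Rightarrow> nat) \<Rightarrow> 'v dbterm \<Rightarrow> 'v dbterm" where
  "ren f a = (case a of DFree x \<Rightarrow> DFree x | DBound i \<Rightarrow> DBound (f i)
     | DAbs b \<Rightarrow> DAbs (ren (lift f) b) | DApp b c \<Rightarrow> DApp (ren f b) (ren f c))"

lemma ren_simps[simp]: "ren f (DFree x) = DFree x" "ren f (DBound i) = DBound (f i)"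
  "ren f (DAbs b) = DAbs (ren (lift f) b)" "ren f (DApp b c) = DApp (ren f b) (ren f c)"
  by (subst ren.code; simp)+

lemma ren_comp: "ren f (ren g a) = ren (f \<circ> g) a"
proof -
  have "lift f \<circ> lift g = lift (f \<circ> g)" for f g
    by (auto simp: lift_def fun_eq_iff split: nat.splits)
  note l = this
  show ?thesis
    apply (rule dbterm_eqI[where R="\<lambda>x y. \<exists>f g a. x = ren f (ren g a) \<and> y = ren (f \<circ> g) a"])
     apply blast
    subgoal for x y
      apply (elim exE conjE)
      subgoal for f g a by (cases a) (auto simp: l[symmetric])
      done
    done
qed

lemma ren_id: "ren id a = a"
proof -
  have l: "lift id = id" by (auto simp: lift_def fun_eq_iff split: nat.splits)
  show ?thesis
    apply (rule dbterm_eqI[where R="\<lambda>x y. x = ren id y"])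
     apply simp
    subgoal for x y by (cases y) (auto simp: l)
    done
qed

lemma ren_db:
  assumes "\<forall>x. free x s \<longrightarrow> idx G' x = map_option f (idx G x)"
  shows "db G' s = ren f (db G s)"
proof (rule dbterm_eqI[where R="\<lambda>a b. \<exists>G G' f s. (\<forall>x. free x s \<longrightarrow> idx G' x = map_option f (idx G x))
        \<and> a = db G' s \<and> b = ren f (db G s)"])
  show "\<exists>G0 G0' f0 s0. (\<forall>x. free x s0 \<longrightarrow> idx G0' x = map_option f0 (idx G0 x)) \<and> db G' s = db G0' s0 \<and> ren f (db G s) = ren f0 (db G0 s0)"
    using assms by blast
next
  fix a b assume "\<exists>G G' f s. (\<forall>x. free x s \<longrightarrow> idx G' x = map_option f (idx G x)) \<and> a = db G' s \<and> b = ren f (db G s)"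
  then obtain G G' f s where h: "\<forall>x. free x s \<longrightarrow> idx G' x = map_option f (idx G x)" and ab: "a = db G' s" "b = ren f (db G s)"
    by blast
  show "(\<exists>x. a = DFree x \<and> b = DFree x) \<or> (\<exists>i. a = DBound i \<and> b = DBound i)
      \<or> (\<exists>a' b'. a = DAbs a' \<and> b = DAbs b' \<and> (\<exists>G G' f s. (\<forall>x. free x s \<longrightarrow> idx G' x = map_option f (idx G x)) \<and> a' = db G' s \<and> b' = ren f (db G s)))
      \<or> (\<exists>a1 a2 b1 b2. a = DApp a1 a2 \<and> b = DApp b1 b2 \<and> (\<exists>G G' f s. (\<forall>x. free x s \<longrightarrow> idx G' x = map_option f (idx G x)) \<and> a1 = db G' s \<and> b1 = ren f (db G s))
           \<and> (\<exists>G G' f s. (\<forall>x. free x s \<longrightarrow> idx G' x = map_option f (idx G x)) \<and> a2 = db G' s \<and> b2 = ren f (db G s)))"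
  proof (cases s)
    case (Var x)
    then show ?thesis using h ab by (auto simp: db_Var split: option.splits)
  next
    case (Abs y u)
    have "\<forall>x. free x u \<longrightarrow> idx (y # G') x = map_option (lift f) (idx (y # G) x)"
      using h Abs by (auto simp: lift_def option.map_comp o_def)
    then show ?thesis unfolding ab Abs db_Abs ren_simps by blast
  next
    case (App u v)
    have "\<forall>x. free x u \<longrightarrow> idx G' x = map_option f (idx G x)" "\<forall>x. free x v \<longrightarrow> idx G' x = map_option f (idx G x)"
      using h App by auto
    then show ?thesis unfolding ab App db_App ren_simps by blast
  qed
qed

lemma db_wk: "\<not> free y s \<Longrightarrow> db (y # G) s = ren Suc (db G s)"
  by (rule ren_db) auto


definition step_rel :: "('v dbterm \<Rightarrow> 'v dbterm \<Rightarrow> bool) \<Rightarrow> 'v dbterm \<Rightarrow> 'v dbterm \<Rightarrow> bool" where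
  "step_rel R a b \<longleftrightarrow> (\<exists>x. a = DFree x \<and> b = DFree x) \<or> (\<exists>i. a = DBound i \<and> b = DBound i)
      \<or> (\<exists>a' b'. a = DAbs a' \<and> b = DAbs b' \<and> R a' b')
      \<or> (\<exists>a1 a2 b1 b2. a = DApp a1 a2 \<and> b = DApp b1 b2 \<and> R a1 b1 \<and> R a2 b2)"

lemma dbterm_eqI': "R a b \<Longrightarrow> (\<And>a b. R a b \<Longrightarrow> step_rel R a b) \<Longrightarrow> a = b"
  by (rule dbterm_eqI[of R]) (auto simp: step_rel_def)

definition RA :: "'v dbterm \<Rightarrow> 'v dbterm \<Rightarrow> bool" where
  "RA a b \<longleftrightarrow> (\<exists>f xs s zs t. length xs = length zs \<and> EQa (xs,s) (zs,t)
     \<and> a = ren f (db (rev xs) s) \<and> b = ren f (db (rev zs) t))"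

lemma RA_step:
  "length xs = n \<Longrightarrow> length xs = length zs \<Longrightarrow> EQa (xs,s) (zs,t)
   \<Longrightarrow> step_rel RA (ren f (db (rev xs) s)) (ren f (db (rev zs) t))"
proof (induction n arbitrary: xs zs s t f rule: less_induct)
  case (less n)
  from less.prems(3) show ?case
  proof (cases rule: EQa.cases)
    case (EQa_ax xs0 zs0 y u)
    then show ?thesis by (auto simp: step_rel_def db_Var)
  next
    case (EQa_wk xs0 zs0 y w)
    have "ren f (db (rev xs) s) = ren (f \<circ> Suc) (db (rev xs0) s)"
      using EQa_wk by (simp add: db_wk ren_comp)
    moreover have "ren f (db (rev zs) t) = ren (f \<circ> Suc) (db (rev zs0) t)"
      using EQa_wk by (simp add: db_wk ren_comp)
    moreover have "step_rel RA (ren (f \<circ> Suc) (db (rev xs0) s)) (ren (f \<circ> Suc) (db (rev zs0) t))"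
      using less.IH[of "length xs0" xs0 zs0 s t "f \<circ> Suc"] EQa_wk less.prems by (simp add: comp_def)
    ultimately show ?thesis by simp
  next
    case (EQa_lam y s' u t')
    have "RA (ren (lift f) (db (rev (xs @ [y])) s')) (ren (lift f) (db (rev (zs @ [u])) t'))"
      unfolding RA_def using EQa_lam less.prems
      by (intro exI[of _ "lift f"] exI[of _ "xs @ [y]"] exI[of _ s'] exI[of _ "zs @ [u]"] exI[of _ t']) simp
    then show ?thesis using EQa_lam by (auto simp: step_rel_def)
  next
    case (EQa_app s0 t0 s1 t1)
    have "RA (ren f (db (rev xs) s0)) (ren f (db (rev zs) t0))" "RA (ren f (db (rev xs) s1)) (ren f (db (rev zs) t1))"
      unfolding RA_def using EQa_app less.prems by blast+
    then show ?thesis using EQa_app by (auto simp: step_rel_def)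
  qed
qed

lemma EQa_sound: "length xs = length zs \<Longrightarrow> EQa (xs,s) (zs,t) \<Longrightarrow> db (rev xs) s = db (rev zs) t"
proof -
  assume a: "length xs = length zs" "EQa (xs,s) (zs,t)"
  have "ren id (db (rev xs) s) = ren id (db (rev zs) t)"
  proof (rule dbterm_eqI'[of RA])
    show "RA (ren id (db (rev xs) s)) (ren id (db (rev zs) t))" unfolding RA_def using a by blast
  next
    fix a b assume "RA a b" then obtain f xs s zs t where "length xs = length zs" "EQa (xs,s) (zs,t)"
     "a = ren f (db (rev xs) s)" "b = ren f (db (rev zs) t)" unfolding RA_def by blast
    then show "step_rel RA a b" using RA_step by blast
  qed
  then show ?thesis by (simp add: ren_id)
qed


lemma idx_Some_iff: "(\<exists>i. idx G x = Some i) \<longleftrightarrow> x \<in> set G"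
  by (induction G) auto

lemma prefixed_Abs: "prefixed (xs, Abs y s) \<longleftrightarrow> prefixed (xs @ [y], s)"
  unfolding prefixed_def by auto

lemma prefixed_App: "prefixed (xs, App s t) \<longleftrightarrow> prefixed (xs, s) \<and> prefixed (xs, t)"
  unfolding prefixed_def by auto

lemma db_Var_cases:
  assumes "db G t = DBound i"
  obtains a where "t = Var a" "idx G a = Some i"
  using assms by (cases t) (auto simp: db_Var split: option.splits)

lemma db_Abs_cases:
  assumes "db G t = DAbs b"
  obtains u t' where "t = Abs u t'" "b = db (u # G) t'"
  using assms by (cases t) (auto simp: db_Var split: option.splits)

lemma db_App_cases:
  assumes "db G t = DApp b c"
  obtains t0 t1 where "t = App t0 t1" "b = db G t0" "c = db G t1"
  using assms by (cases t) (auto simp: db_Var split: option.splits)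

definition XC :: "'v ppt \<Rightarrow> 'v ppt \<Rightarrow> bool" where
  "XC P Q \<longleftrightarrow> prefixed P \<and> prefixed Q \<and> length (fst P) = length (fst Q)
     \<and> db (rev (fst P)) (snd P) = db (rev (fst Q)) (snd Q)"

lemma EQa_complete: "XC P Q \<Longrightarrow> EQa P Q"
proof (coinduction arbitrary: P Q rule: EQa.coinduct)
  case (EQa P Q)
  obtain xs s where P: "P = (xs, s)" by fastforce
  obtain zs t where Q: "Q = (zs, t)" by fastforce
  have pP: "prefixed (xs, s)" and pQ: "prefixed (zs, t)" and len: "length xs = length zs"
    and d: "db (rev xs) s = db (rev zs) t" using EQa unfolding XC_def P Q by auto
  show ?case
  proof (cases s)
    case (Var x)
    have "x \<in> set xs" using pP Var unfolding prefixed_def by auto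
    then obtain i where i: "idx (rev xs) x = Some i" using idx_Some_iff[of "rev xs" x] by auto
    then have "db (rev zs) t = DBound i" using d Var by (simp add: db_Var)
    then obtain a where ta: "t = Var a" "idx (rev zs) a = Some i" by (rule db_Var_cases)
    obtain xs' y where xs': "xs = xs' @ [y]" using \<open>x \<in> set xs\<close> by (cases xs rule: rev_exhaust) auto
    obtain zs' b where zs': "zs = zs' @ [b]" using ta(2) by (cases zs rule: rev_exhaust) auto
    show ?thesis
    proof (cases "x = y")
      case True
      then have "i = 0" using i xs' by simp
      then have "a = b" using ta zs' by (auto split: if_splits)
      then show ?thesis using True P Q Var ta xs' zs' len by auto
    next
      case False
      then obtain j where j: "i = Suc j" "idx (rev xs') x = Some j" using i xs' by auto
      have "a \<noteq> b" using ta zs' j by auto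
      then have j2: "idx (rev zs') a = Some j" using ta zs' j by auto
      have "x \<in> set xs'" using j(2) idx_Some_iff[of "rev xs'" x] by auto
      moreover have "a \<in> set zs'" using j2 idx_Some_iff[of "rev zs'" a] by auto
      ultimately have "XC (xs', Var x) (zs', Var a)"
        unfolding XC_def prefixed_def using j j2 len xs' zs' by (auto simp: db_Var)
      then show ?thesis using False \<open>a \<noteq> b\<close> P Q Var ta xs' zs' len by auto
    qed
  next
    case (Abs y s')
    then have "db (rev zs) t = DAbs (db (y # rev xs) s')" using d by simp
    then obtain u t' where t: "t = Abs u t'" "db (y # rev xs) s' = db (u # rev zs) t'"
      by (rule db_Abs_cases) auto
    have "XC (xs @ [y], s') (zs @ [u], t')"
      unfolding XC_def using pP pQ Abs t len by (simp add: prefixed_Abs)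
    then show ?thesis using P Q Abs t len by auto
  next
    case (App s0 s1)
    then have "db (rev zs) t = DApp (db (rev xs) s0) (db (rev xs) s1)" using d by simp
    then obtain t0 t1 where t: "t = App t0 t1" "db (rev xs) s0 = db (rev zs) t0" "db (rev xs) s1 = db (rev zs) t1"
      by (rule db_App_cases) auto
    have "XC (xs, s0) (zs, t0)" "XC (xs, s1) (zs, t1)"
      unfolding XC_def using pP pQ App t len by (simp_all add: prefixed_App)
    then show ?thesis using P Q App t len by auto
  qed
qed

theorem part1: "closed s \<Longrightarrow> closed t \<Longrightarrow> (EQa ([], s) ([], t) \<longleftrightarrow> alpha s t)"
proof
  assume "EQa ([], s) ([], t)" then show "alpha s t" using EQa_sound[of "[]" "[]" s t] by (simp add: alpha_def)
next
  assume "closed s" "closed t" "alpha s t"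
  then have "XC ([], s) ([], t)" by (simp add: XC_def prefixed_def closed_def alpha_def)
  then show "EQa ([], s) ([], t)" by (rule EQa_complete)
qed


lemma db_abss: "db G (abss xs s) = (DAbs ^^ length xs) (db (rev xs @ G) s)"
  by (induction xs arbitrary: G) (simp_all add: funpow_swap1)

lemma DAbs_pow_inj: "(DAbs ^^ n) a = (DAbs ^^ n) b \<longleftrightarrow> a = b"
  by (induction n) auto

lemma palpha_iff: "palpha P Q \<longleftrightarrow> XC P Q"
  by (auto simp: palpha_def XC_def alpha_def db_abss DAbs_pow_inj)

lemma abs_eq_iff: "prefixed P \<Longrightarrow> prefixed Q \<Longrightarrow> abs_pfterm P = abs_pfterm Q \<longleftrightarrow> XC P Q"
proof -
  assume "prefixed P" "prefixed Q"
  then have "palpha P P" "palpha Q Q" by (auto simp: palpha_iff XC_def)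
  then show ?thesis using Quotient3_rel[OF Quotient3_pfterm, of P Q] by (simp add: palpha_iff)
qed

definition RE :: "'v dbterm \<Rightarrow> 'v dbterm \<Rightarrow> bool" where
  "RE a b \<longleftrightarrow> (\<exists>f xs s zs t. prefixed (xs, s) \<and> prefixed (zs, t) \<and> length xs = length zs
     \<and> EQ (abs_pfterm (xs,s)) (abs_pfterm (zs,t))
     \<and> a = ren f (db (rev xs) s) \<and> b = ren f (db (rev zs) t))"

lemma RE_step:
  "length xs = n \<Longrightarrow> length xs = length zs \<Longrightarrow> prefixed (xs, s) \<Longrightarrow> prefixed (zs, t)
   \<Longrightarrow> EQ (abs_pfterm (xs,s)) (abs_pfterm (zs,t))
   \<Longrightarrow> step_rel RE (ren f (db (rev xs) s)) (ren f (db (rev zs) t))"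
proof (induction n arbitrary: xs zs s t f rule: less_induct)
  case (less n)
  note pr = less.prems
  from less.prems(5) show ?case
  proof (cases rule: EQ.cases)
    case (EQ_ax xs0 zs0 y u)
    have "XC (xs, s) (xs0 @ [y], Var y)" "XC (zs, t) (zs0 @ [u], Var u)"
      using EQ_ax pr by (simp_all add: abs_eq_iff prefixed_def)
    then show ?thesis by (auto simp: step_rel_def db_Var XC_def)
  next
    case (EQ_wk xs0 zs0 s0 t0 y w)
    have p1: "prefixed (xs0 @ [y], s0)" "prefixed (zs0 @ [w], t0)"
      using EQ_wk by (auto simp: prefixed_def)
    have x1: "XC (xs, s) (xs0 @ [y], s0)" "XC (zs, t) (zs0 @ [w], t0)"
      using EQ_wk pr p1 by (simp_all add: abs_eq_iff)
    have "ren f (db (rev xs) s) = ren (f \<circ> Suc) (db (rev xs0) s0)"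
      using EQ_wk x1 by (simp add: XC_def db_wk ren_comp)
    moreover have "ren f (db (rev zs) t) = ren (f \<circ> Suc) (db (rev zs0) t0)"
      using EQ_wk x1 by (simp add: XC_def db_wk ren_comp)
    moreover have "length xs0 < n" using x1 pr by (simp add: XC_def)
    moreover have "step_rel RE (ren (f \<circ> Suc) (db (rev xs0) s0)) (ren (f \<circ> Suc) (db (rev zs0) t0))"
      using less.IH[of "length xs0" xs0 zs0 s0 t0 "f \<circ> Suc"] EQ_wk \<open>length xs0 < n\<close> by (simp add: comp_def)
    ultimately show ?thesis by simp
  next
    case (EQ_lam xs0 zs0 y s0 u t0)
    have x1: "XC (xs, s) (xs0, Abs y s0)" "XC (zs, t) (zs0, Abs u t0)"
      using EQ_lam pr by (simp_all add: abs_eq_iff prefixed_Abs)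
    have "RE (ren (lift f) (db (rev (xs0 @ [y])) s0)) (ren (lift f) (db (rev (zs0 @ [u])) t0))"
      unfolding RE_def using EQ_lam
      by (intro exI[of _ "lift f"] exI[of _ "xs0 @ [y]"] exI[of _ s0] exI[of _ "zs0 @ [u]"] exI[of _ t0]) simp
    then show ?thesis using x1 by (auto simp: step_rel_def XC_def)
  next
    case (EQ_app xs0 zs0 s0 t0 s1 t1)
    have x1: "XC (xs, s) (xs0, App s0 s1)" "XC (zs, t) (zs0, App t0 t1)"
      using EQ_app pr by (simp_all add: abs_eq_iff prefixed_App)
    have "RE (ren f (db (rev xs0) s0)) (ren f (db (rev zs0) t0))" "RE (ren f (db (rev xs0) s1)) (ren f (db (rev zs0) t1))"
      unfolding RE_def using EQ_app by blast+
    then show ?thesis using x1 by (auto simp: step_rel_def XC_def)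
  qed
qed

lemma EQ_sound: "prefixed P \<Longrightarrow> prefixed Q \<Longrightarrow> EQ (abs_pfterm P) (abs_pfterm Q) \<Longrightarrow> length (fst P) = length (fst Q) \<Longrightarrow> XC P Q"
proof -
  assume a: "prefixed P" "prefixed Q" "EQ (abs_pfterm P) (abs_pfterm Q)" "length (fst P) = length (fst Q)"
  obtain xs s where P: "P = (xs, s)" by fastforce
  obtain zs t where Q: "Q = (zs, t)" by fastforce
  have "ren id (db (rev xs) s) = ren id (db (rev zs) t)"
  proof (rule dbterm_eqI'[of RE])
    show "RE (ren id (db (rev xs) s)) (ren id (db (rev zs) t))" unfolding RE_def using a P Q
      by (intro exI[of _ id] exI[of _ xs] exI[of _ s] exI[of _ zs] exI[of _ t]) simp
  next
    fix a b assume "RE a b"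
    then obtain f xs s zs t where "prefixed (xs, s)" "prefixed (zs, t)" "length xs = length zs"
      "EQ (abs_pfterm (xs,s)) (abs_pfterm (zs,t))"
      "a = ren f (db (rev xs) s)" "b = ren f (db (rev zs) t)" unfolding RE_def by blast
    then show "step_rel RE a b" using RE_step by blast
  qed
  then show ?thesis using a P Q by (simp add: ren_id XC_def)
qed


lemma EQ_refl: "prefixed P \<Longrightarrow> EQ (abs_pfterm P) (abs_pfterm P)"
proof (rule EQ.coinduct[where X="\<lambda>M N. \<exists>P. prefixed P \<and> M = abs_pfterm P \<and> N = abs_pfterm P"], goal_cases)
  case 1
  then show ?case by blast
next
  case (2 M N)
  then obtain xs s where pP: "prefixed (xs, s)" and MN: "M = abs_pfterm (xs, s)" "N = abs_pfterm (xs, s)"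
    by (metis surj_pair)
  show ?case
  proof (cases s)
    case (Var x)
    have "x \<in> set xs" using pP Var unfolding prefixed_def by auto
    obtain xs' y where xs': "xs = xs' @ [y]" using \<open>x \<in> set xs\<close> by (cases xs rule: rev_exhaust) auto
    show ?thesis
    proof (cases "x = y")
      case True
      show ?thesis
        apply (rule disjI1)
        apply (rule exI[of _ xs'], rule exI[of _ xs'], rule exI[of _ y], rule exI[of _ y])
        using True MN Var xs' by simp
    next
      case False
      have p: "prefixed (xs', Var x)" using \<open>x \<in> set xs\<close> False xs' by (auto simp: prefixed_def)
      show ?thesis
        apply (rule disjI2, rule disjI1)
        apply (rule exI[of _ xs'], rule exI[of _ xs'], rule exI[of _ "Var x"], rule exI[of _ "Var x"], rule exI[of _ y], rule exI[of _ y])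
        using p False MN Var xs' by auto
    qed
  next
    case (Abs y s')
    have p: "prefixed (xs @ [y], s')" using pP Abs by (simp add: prefixed_Abs)
    show ?thesis
      apply (rule disjI2, rule disjI2, rule disjI1)
      apply (rule exI[of _ xs], rule exI[of _ xs], rule exI[of _ y], rule exI[of _ s'], rule exI[of _ y], rule exI[of _ s'])
      using p MN Abs by auto
  next
    case (App s0 s1)
    have p: "prefixed (xs, s0)" "prefixed (xs, s1)" using pP App by (simp_all add: prefixed_App)
    show ?thesis
      apply (rule disjI2, rule disjI2, rule disjI2)
      apply (rule exI[of _ xs], rule exI[of _ xs], rule exI[of _ s0], rule exI[of _ s0], rule exI[of _ s1], rule exI[of _ s1])
      using p MN App by auto
  qed
qed

lemma EQ_len: "prefixed P \<Longrightarrow> prefixed Q \<Longrightarrow> EQ (abs_pfterm P) (abs_pfterm Q) \<Longrightarrow> length (fst P) = length (fst Q)"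
proof -
  assume pr: "prefixed P" "prefixed Q" and e: "EQ (abs_pfterm P) (abs_pfterm Q)"
  from e show ?thesis
  proof (cases rule: EQ.cases)
    case (EQ_ax xs0 zs0 y u)
    have "XC P (xs0 @ [y], Var y)" "XC Q (zs0 @ [u], Var u)"
      using EQ_ax pr by (simp_all add: abs_eq_iff prefixed_def)
    then show ?thesis using EQ_ax by (simp add: XC_def)
  next
    case (EQ_wk xs0 zs0 s0 t0 y w)
    have p1: "prefixed (xs0 @ [y], s0)" "prefixed (zs0 @ [w], t0)"
      using EQ_wk by (auto simp: prefixed_def)
    have "XC P (xs0 @ [y], s0)" "XC Q (zs0 @ [w], t0)"
      using EQ_wk pr p1 by (simp_all add: abs_eq_iff)
    then show ?thesis using EQ_wk by (simp add: XC_def)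
  next
    case (EQ_lam xs0 zs0 y s0 u t0)
    have "XC P (xs0, Abs y s0)" "XC Q (zs0, Abs u t0)"
      using EQ_lam pr by (simp_all add: abs_eq_iff prefixed_Abs)
    then show ?thesis using EQ_lam by (simp add: XC_def)
  next
    case (EQ_app xs0 zs0 s0 t0 s1 t1)
    have "XC P (xs0, App s0 s1)" "XC Q (zs0, App t0 t1)"
      using EQ_app pr by (simp_all add: abs_eq_iff prefixed_App)
    then show ?thesis using EQ_app by (simp add: XC_def)
  qed
qed

lemma rep_prefixed: "prefixed (rep_pfterm M)"
  using Quotient3_rep_reflp[OF Quotient3_pfterm, of M] by (simp add: palpha_def)

theorem part2: "EQ M N \<longleftrightarrow> M = N"
proof
  assume e: "EQ M N"
  have M: "M = abs_pfterm (rep_pfterm M)" and N: "N = abs_pfterm (rep_pfterm N)"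
    by (simp_all add: Quotient3_abs_rep[OF Quotient3_pfterm])
  have "length (fst (rep_pfterm M)) = length (fst (rep_pfterm N))"
    using EQ_len[OF rep_prefixed rep_prefixed] e M N by metis
  then have "XC (rep_pfterm M) (rep_pfterm N)"
    using EQ_sound[OF rep_prefixed rep_prefixed] e M N by metis
  then show "M = N" using M N rep_prefixed abs_eq_iff by metis
next
  assume "M = N"
  then show "EQ M N" using EQ_refl[OF rep_prefixed[of M]] by (simp add: Quotient3_abs_rep[OF Quotient3_pfterm])
qed



theorem mainTheorem5:
  shows "(\<forall>s t :: 'v pterm. closed s \<longrightarrow> closed t \<longrightarrow> (EQa ([], s) ([], t) \<longleftrightarrow> alpha s t))
       \<and> (\<forall>M N :: 'v pfterm. EQ M N \<longleftrightarrow> M = N)"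
  using part1 part2 by blast

end
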